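(* Let $d\ge2$ be an integer, $D_1,\dots,D_d$ real constants, $D=\sum_iD_i$, and let $m:[-D^2/d,\pi^2/d)\to[0,\infty)$ be defined by (with $\mu=-\lambda$ for $\lambda<0$) $$m(\lambda)=\begin{cases}0 & \text{if } \lambda=-D^2/d<0,\\[2pt] \left|\ln\left(\dfrac{\big(\frac{e^{\sqrt{d\mu}}}{\sqrt{-C_-}}+1\big)\big(-\frac{1}{\sqrt{-C_-}}+1\big)}{\big(1-\frac{e^{\sqrt{d\mu}}}{\sqrt{-C_-}}\big)\big(1+\frac{1}{\sqrt{-C_-}}\big)}\right)\right| & \text{if } -D^2/d<\lambda<0,\\[2pt] |D| & \text{if } \lambda=0,\\[2pt] \left|\ln\dfrac{\tan(C_++\sqrt{d\lambda})+\sec(C_++\sqrt{d\lambda})}{\tan(C_+)+\sec(C_+)}\right| & \text{if } 0<\lambda<\pi^2/d,\end{cases}$$ where $C_-=\dfrac{e^{2\sqrt{d\mu}}-e^{D+\sqrt{d\mu}}}{e^{D+\sqrt{d\mu}}-1}$ and $C_+=\arctan\left(\dfrac{\cos(\sqrt{d\lambda})-e^D}{\sin(\sqrt{d\lambda})}\right)$. Then $m$ is surjective onto $[0,\infty)$.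
   Context: For $-D^2/d<\lambda<0$ one has $C_-<0$, so $\sqrt{-C_-}$ is defined. *)

theory Defs
  imports Complex_Main
begin

definition sec :: "real \<Rightarrow> real" where
  "sec x = 1 / cos x"

definition C_minus :: "nat \<Rightarrow> real \<Rightarrow> real \<Rightarrow> real" where
  "C_minus d Dsum lam = (let mu = - lam in
     (exp (2 * sqrt (real d * mu)) - exp (Dsum + sqrt (real d * mu))) /
     (exp (Dsum + sqrt (real d * mu)) - 1))"

definition C_plus :: "nat \<Rightarrow> real \<Rightarrow> real \<Rightarrow> real" where
  "C_plus d Dsum lam = arctan ((cos (sqrt (real d * lam)) - exp Dsum) / sin (sqrt (real d * lam)))"

definition m_fun :: "nat \<Rightarrow> real \<Rightarrow> real \<Rightarrow> real" where
  "m_fun d Dsum lam =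
    (if lam = (- (Dsum^2) / real d) \<and> (- (Dsum^2) / real d) < 0 then 0
     else if (- (Dsum^2) / real d) < lam \<and> lam < 0 then
       (let mu = - lam; s = sqrt (- C_minus d Dsum lam); e = exp (sqrt (real d * mu)) in
        \<bar>ln (((e / s + 1) * (- 1 / s + 1)) / ((1 - e / s) * (1 + 1 / s)))\<bar>)
     else if lam = 0 then \<bar>Dsum\<bar>
     else
       (let c = C_plus d Dsum lam; t = sqrt (real d * lam) in
        \<bar>ln ((tan (c + t) + sec (c + t)) / (tan c + sec c))\<bar>))"

end

theory Submission
  imports Defs
begin

lemma tan_sec: "tan x + sec x = (1 + sin x) / cos x"
  by (simp add: tan_def sec_def add_divide_distrib)

lemma pos_branch:
  fixes E t :: real
  assumes E: "E > 0" and t: "0 < t" "t < pi"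
  defines "c \<equiv> arctan ((cos t - E) / sin t)"
  defines "\<rho> \<equiv> sqrt (1 + E^2 - 2 * E * cos t)"
  shows "(tan (c + t) + sec (c + t)) / (tan c + sec c) = (1 + E + \<rho>) / (1 + E - \<rho>)"
proof -
  have st: "sin t > 0" using t by (simp add: sin_gt_zero)
  have key: "1 + E^2 - 2 * E * cos t = (cos t - E)^2 + (sin t)^2"
    using sin_cos_squared_add[of t] by (simp add: power2_eq_square algebra_simps)
  have pos: "1 + E^2 - 2 * E * cos t > 0" unfolding key using st by (simp add: add_nonneg_pos)
  have rho2: "\<rho>^2 = 1 + E^2 - 2 * E * cos t" unfolding \<rho>_def using pos by simp
  have rhopos: "\<rho> > 0" unfolding \<rho>_def using pos by simp
  have "1 + ((cos t - E) / sin t)^2 = (\<rho> / sin t)^2"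
    using st rho2 key by (simp add: field_simps power2_eq_square)
  hence R: "sqrt (1 + ((cos t - E) / sin t)^2) = \<rho> / sin t"
    using st rhopos by simp
  have sinc: "sin c = (cos t - E) / \<rho>"
    unfolding c_def sin_arctan R using st by simp
  have cosc: "cos c = sin t / \<rho>"
    unfolding c_def cos_arctan R using st by simp
  have sinct: "sin (c + t) = (1 - E * cos t) / \<rho>"
    unfolding sin_add sinc cosc using sin_cos_squared_add[of t] rhopos
    by (simp add: field_simps power2_eq_square)
  have cosct: "cos (c + t) = E * sin t / \<rho>"
    unfolding cos_add sinc cosc using rhopos by (simp add: field_simps)
  have A: "tan (c + t) + sec (c + t) = (\<rho> + 1 - E * cos t) / (E * sin t)"
    unfolding tan_sec sinct cosct using rhopos st E by (simp add: field_simps)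
  have B: "tan c + sec c = (\<rho> + cos t - E) / sin t"
    unfolding tan_sec sinc cosc using rhopos st E by (simp add: field_simps)
  have "(cos t - E)^2 < \<rho>^2" using rho2 key st by simp
  hence "\<bar>cos t - E\<bar> < \<rho>" using rhopos
    by (metis abs_of_pos power2_abs power_less_imp_less_base less_eq_real_def)
  hence Bpos: "\<rho> + cos t - E > 0" by linarith
  have "(cos t)^2 < 1" using sin_cos_squared_add[of t] st
    by (smt (verit) zero_less_power)
  hence "cos t > -1" by (simp add: abs_square_less_1)
  hence "E * (1 + cos t) > 0" using E by simp
  hence "\<rho>^2 < (1 + E)^2" using rho2
    by (simp add: power2_eq_square algebra_simps)
  hence C: "1 + E - \<rho> > 0" using rhopos E
    by (smt (verit) power_mono)
  have "(\<rho> + 1 - E * cos t) * (1 + E - \<rho>) = E * (\<rho> + cos t - E) * (1 + E + \<rho>)"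
    using rho2 by algebra
  hence eq: "(\<rho> + 1 - E * cos t) / (E * (\<rho> + cos t - E)) = (1 + E + \<rho>) / (1 + E - \<rho>)"
    using Bpos C E by (simp add: frac_eq_eq)
  have "(tan (c + t) + sec (c + t)) / (tan c + sec c) = (\<rho> + 1 - E * cos t) / (E * (\<rho> + cos t - E))"
    unfolding A B using st by simp
  thus ?thesis using eq by simp
qed

lemma neg_branch:
  fixes E a :: real
  assumes E: "E > 0" and a: "a > 1" and prod: "(E - a) * (E * a - 1) > 0"
  defines "\<sigma> \<equiv> sqrt (- ((a^2 - E * a) / (E * a - 1)))"
  defines "r \<equiv> \<sigma> * (E * a - 1) / (a * (1 + E))"
  shows "((a / \<sigma> + 1) * (- 1 / \<sigma> + 1)) / ((1 - a / \<sigma>) * (1 + 1 / \<sigma>)) = (1 - r) / (1 + r)"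
    and "r^2 = (E - a) * (E * a - 1) / (a * (1 + E)^2)"
    and "r^2 < 1"
proof -
  have ne: "E * a - 1 \<noteq> 0" using prod by auto
  have q: "- ((a^2 - E * a) / (E * a - 1)) = a * (E - a) / (E * a - 1)"
    by (simp add: minus_divide_left power2_eq_square algebra_simps)
  have "(E - a) / (E * a - 1) > 0" using prod by (simp add: zero_less_divide_iff zero_less_mult_iff)
  hence qpos: "- ((a^2 - E * a) / (E * a - 1)) > 0" unfolding q using a
    by (metis mult_pos_pos times_divide_eq_right less_trans zero_less_one)
  have "\<sigma>^2 = a * (E - a) / (E * a - 1)"
    unfolding \<sigma>_def using qpos q by (simp only: real_sqrt_pow2 less_imp_le)
  hence sig2: "\<sigma>^2 * (E * a - 1) = a * (E - a)" using ne by simp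
  have sigpos: "\<sigma> > 0" unfolding \<sigma>_def using qpos by simp
  have sa: "\<sigma> \<noteq> a"
  proof
    assume "\<sigma> = a"
    hence "a^2 * (E * a - 1) = a * (E - a)" using sig2 by simp
    hence "a * (E * (a^2 - 1)) = 0" by (simp add: algebra_simps power2_eq_square power3_eq_cube)
    hence "a^2 = 1" using a E by simp
    moreover have "a^2 > 1^2" using a by (intro power_strict_mono) auto
    ultimately show False by simp
  qed
  have rdef: "r * (a * (1 + E)) = \<sigma> * (E * a - 1)" unfolding r_def using a E by simp
  show r2: "r^2 = (E - a) * (E * a - 1) / (a * (1 + E)^2)"
  proof -
    have "r^2 * (a * (1 + E))^2 = \<sigma>^2 * (E * a - 1) * (E * a - 1)"
      using rdef by (metis power2_eq_square power_mult_distrib mult.commute mult.assoc)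
    also have "... = a * ((E - a) * (E * a - 1))" using sig2 by simp
    finally have "r^2 = a * ((E - a) * (E * a - 1)) / (a * (1 + E))^2"
      using a E by (simp add: eq_divide_eq)
    also have "... = (E - a) * (E * a - 1) / (a * (1 + E)^2)"
      using a by (simp add: power_mult_distrib power2_eq_square)
    finally show ?thesis .
  qed
  have "(E - a) * (E * a - 1) < a * (1 + E)^2"
  proof -
    have "(E - a) * (E * a - 1) = a * (1 + E)^2 - E * (a + 1)^2"
      by (simp add: algebra_simps power2_eq_square)
    thus ?thesis using E a by simp
  qed
  thus r1: "r^2 < 1" unfolding r2 using a E by simp
  hence "\<bar>r\<bar> < 1" by (simp add: abs_square_less_1)
  hence rp: "1 + r > 0" "1 - r > 0" by auto
  have X: "((a / \<sigma> + 1) * (- 1 / \<sigma> + 1)) / ((1 - a / \<sigma>) * (1 + 1 / \<sigma>))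
      = ((a + \<sigma>) * (\<sigma> - 1)) / ((\<sigma> - a) * (\<sigma> + 1))"
  proof -
    have "a / \<sigma> + 1 = (a + \<sigma>) / \<sigma>" "- 1 / \<sigma> + 1 = (\<sigma> - 1) / \<sigma>"
      "1 - a / \<sigma> = (\<sigma> - a) / \<sigma>" "1 + 1 / \<sigma> = (\<sigma> + 1) / \<sigma>"
      using sigpos by (simp_all add: field_simps)
    moreover have "\<sigma> + 1 \<noteq> 0" "\<sigma> - a \<noteq> 0" using sigpos sa by auto
    ultimately show ?thesis using sigpos by simp
  qed
  have G0: "(E * a - 1) * ((a - 1) * \<sigma> + r * (\<sigma>^2 - a)) = 0"
    using sig2 rdef by algebra
  hence G: "(a - 1) * \<sigma> + r * (\<sigma>^2 - a) = 0" using ne by simp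
  have "((a + \<sigma>) * (\<sigma> - 1)) * (1 + r) = (1 - r) * ((\<sigma> - a) * (\<sigma> + 1))"
    using G by (simp add: algebra_simps power2_eq_square)
  hence "((a + \<sigma>) * (\<sigma> - 1)) / ((\<sigma> - a) * (\<sigma> + 1)) = (1 - r) / (1 + r)"
    using rp sa sigpos by (simp add: frac_eq_eq)
  thus "((a / \<sigma> + 1) * (- 1 / \<sigma> + 1)) / ((1 - a / \<sigma>) * (1 + 1 / \<sigma>)) = (1 - r) / (1 + r)"
    using X by simp
qed

lemma tau_facts:
  fixes y :: real
  assumes "y \<ge> 0"
  defines "\<tau> \<equiv> (exp y - 1) / (exp y + 1)"
  shows "0 \<le> \<tau>" "\<tau> < 1" "y > 0 \<Longrightarrow> \<tau> > 0"
    and "(1 + \<tau>) / (1 - \<tau>) = exp y" "(1 - \<tau>) / (1 + \<tau>) = exp (- y)"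
proof -
  have w: "exp y \<ge> 1" using assms by simp
  have wp: "exp y + 1 > 0" by (smt (verit) exp_gt_zero)
  show "0 \<le> \<tau>" unfolding \<tau>_def using w by simp
  show "\<tau> < 1" unfolding \<tau>_def using wp by simp
  show "y > 0 \<Longrightarrow> \<tau> > 0" unfolding \<tau>_def using wp by simp
  have a: "1 + \<tau> = 2 * exp y / (exp y + 1)" unfolding \<tau>_def using wp by (simp add: field_simps)
  have b: "1 - \<tau> = 2 / (exp y + 1)" unfolding \<tau>_def using wp by (simp add: field_simps)
  show "(1 + \<tau>) / (1 - \<tau>) = exp y" unfolding a b using wp by simp
  have "(1 - \<tau>) / (1 + \<tau>) = inverse ((1 + \<tau>) / (1 - \<tau>))" by simp
  also have "... = exp (- y)" unfolding a b using wp by (simp add: exp_minus)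
  finally show "(1 - \<tau>) / (1 + \<tau>) = exp (- y)" .
qed

lemma log_val:
  fixes y r :: real
  assumes "y \<ge> 0" "r^2 = ((exp y - 1) / (exp y + 1))^2"
  shows "\<bar>ln ((1 - r) / (1 + r))\<bar> = y"
proof -
  define \<tau> where "\<tau> = (exp y - 1) / (exp y + 1)"
  have t: "(1 + \<tau>) / (1 - \<tau>) = exp y" "(1 - \<tau>) / (1 + \<tau>) = exp (- y)"
    using tau_facts[OF assms(1)] unfolding \<tau>_def by auto
  have "r = \<tau> \<or> r = - \<tau>" using assms(2) unfolding \<tau>_def by (simp add: power2_eq_iff)
  thus ?thesis
  proof
    assume "r = \<tau>" thus ?thesis using t assms(1) by simp
  next
    assume "r = - \<tau>" thus ?thesis using t assms(1) by simp
  qed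
qed

lemma tau_cmp:
  fixes y D :: real
  assumes "y \<ge> 0"
  defines "\<tau> \<equiv> (exp y - 1) / (exp y + 1)"
  shows "y < \<bar>D\<bar> \<Longrightarrow> \<tau> * (1 + exp D) < \<bar>1 - exp D\<bar>"
    and "y > \<bar>D\<bar> \<Longrightarrow> \<tau> * (1 + exp D) > \<bar>1 - exp D\<bar>"
proof -
  have wp: "exp y + 1 > 0" by (smt (verit) exp_gt_zero)
  have eq: "\<tau> * (1 + exp D) = (exp y - 1) * (1 + exp D) / (exp y + 1)" unfolding \<tau>_def by simp
  have ab: "\<bar>1 - exp D\<bar> = \<bar>1 - exp D\<bar> * (exp y + 1) / (exp y + 1)" using wp by simp
  have ED: "exp D * exp (- D) = 1" by (simp add: exp_minus)
  show "y < \<bar>D\<bar> \<Longrightarrow> \<tau> * (1 + exp D) < \<bar>1 - exp D\<bar>"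
  proof -
    assume y: "y < \<bar>D\<bar>"
    have "(exp y - 1) * (1 + exp D) < \<bar>1 - exp D\<bar> * (exp y + 1)"
    proof (cases "D \<ge> 0")
      case True
      hence "exp y < exp D" using y by simp
      thus ?thesis using True by (simp add: algebra_simps)
    next
      case False
      hence "exp y < exp (- D)" using y by simp
      hence "exp D * exp y < exp D * exp (- D)" by simp
      hence "exp D * exp y < 1" using ED by simp
      thus ?thesis using False by (simp add: algebra_simps)
    qed
    hence "(exp y - 1) * (1 + exp D) / (exp y + 1) < \<bar>1 - exp D\<bar> * (exp y + 1) / (exp y + 1)"
      by (rule divide_strict_right_mono[OF _ wp])
    thus ?thesis using eq ab by simp
  qed
  show "y > \<bar>D\<bar> \<Longrightarrow> \<tau> * (1 + exp D) > \<bar>1 - exp D\<bar>"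
  proof -
    assume y: "y > \<bar>D\<bar>"
    have "(exp y - 1) * (1 + exp D) > \<bar>1 - exp D\<bar> * (exp y + 1)"
    proof (cases "D \<ge> 0")
      case True
      hence "exp y > exp D" using y by simp
      thus ?thesis using True by (simp add: algebra_simps)
    next
      case False
      hence "exp y > exp (- D)" using y by simp
      hence "exp D * exp y > exp D * exp (- D)" by simp
      hence "exp D * exp y > 1" using ED by simp
      thus ?thesis using False by (simp add: algebra_simps)
    qed
    hence "(exp y - 1) * (1 + exp D) / (exp y + 1) > \<bar>1 - exp D\<bar> * (exp y + 1) / (exp y + 1)"
      by (rule divide_strict_right_mono[OF _ wp])
    thus ?thesis using eq ab by simp
  qed
qed

lemma m_nonneg: "m_fun d D lam \<ge> 0"
  unfolding m_fun_def Let_def by auto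

theorem lemma3p5:
  fixes d :: nat and Ds :: "nat \<Rightarrow> real"
  assumes "d \<ge> 2"
  shows "m_fun d (\<Sum>i=1..d. Ds i) ` {(- ((\<Sum>i=1..d. Ds i)^2) / real d) ..< (pi^2 / real d)} = {0..}"
proof -
  define D where "D = (\<Sum>i=1..d. Ds i)"
  define E where "E = exp D"
  have n: "real d > 0" using assms by simp
  have E: "E > 0" unfolding E_def by simp
  have lo: "- (D^2) / real d \<le> 0" using n by simp
  have hi: "0 < pi^2 / real d" using n by simp
  have "\<exists>lam \<in> {- (D^2) / real d ..< pi^2 / real d}. m_fun d D lam = y" if y: "y \<ge> 0" for y
  proof -
    define \<tau> where "\<tau> = (exp y - 1) / (exp y + 1)"
    note tf = tau_facts[OF y, folded \<tau>_def]
    define \<gamma> where "\<gamma> = (1 + E^2 - \<tau>^2 * (1 + E)^2) / (2 * E)"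
    consider "y = 0" | "y > 0" "y = \<bar>D\<bar>" | "y > 0" "y < \<bar>D\<bar>" | "y > \<bar>D\<bar>"
      using y by linarith
    thus ?thesis
    proof cases
      case 1
      show ?thesis
      proof (cases "D = 0")
        case True
        thus ?thesis using 1 hi unfolding m_fun_def by (intro bexI[of _ 0]) auto
      next
        case False
        hence "- (D^2) / real d < 0" using n by simp
        thus ?thesis using 1 hi unfolding m_fun_def by (intro bexI[of _ "- (D^2) / real d"]) auto
      qed
    next
      case 2
      hence "D \<noteq> 0" by auto
      hence "- (D^2) / real d < 0" using n by simp
      thus ?thesis using 2 hi n unfolding m_fun_def by (intro bexI[of _ 0]) auto
    next
      case 3
      have c1: "\<tau> * (1 + E) < \<bar>1 - E\<bar>" using tau_cmp(1)[OF y 3(2)] unfolding \<tau>_def E_def .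
      have tp: "\<tau> > 0" using tf(3) 3 by simp
      have "(\<tau> * (1 + E))^2 < \<bar>1 - E\<bar>^2" using c1 tp E by (intro power_strict_mono) auto
      hence "\<tau>^2 * (1 + E)^2 < (1 - E)^2" by (simp add: power_mult_distrib)
      hence g1: "\<gamma> > 1" unfolding \<gamma>_def using E by (simp add: field_simps power2_eq_square)
      have "\<tau>^2 * (1 + E)^2 > 0" using tp E by simp
      hence "\<gamma> < (1 + E^2) / (2 * E)" unfolding \<gamma>_def using E by (simp add: divide_strict_right_mono)
      also have "(1 + E^2) / (2 * E) = cosh D"
        unfolding E_def cosh_def using E by (simp add: exp_minus field_simps power2_eq_square)
      also have "cosh D = cosh \<bar>D\<bar>" by simp
      finally have g2: "\<gamma> < cosh \<bar>D\<bar>" .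
      define s where "s = arcosh \<gamma>"
      have cs: "cosh s = \<gamma>" unfolding s_def using g1 by simp
      have sp: "s > 0" unfolding s_def using g1 by simp
      have "cosh s < cosh \<bar>D\<bar>" using g2 cs by simp
      hence sD: "s < \<bar>D\<bar>" using cosh_real_nonneg_less_iff[of s "\<bar>D\<bar>"] sp by simp
      have "s^2 < \<bar>D\<bar>^2" using sD sp by (intro power_strict_mono) auto
      hence s2: "s^2 < D^2" by simp
      define lam where "lam = - (s^2) / real d"
      have lam1: "- (D^2) / real d < lam" unfolding lam_def using s2 n by (simp add: divide_strict_right_mono)
      have lam2: "lam < 0" unfolding lam_def using sp n by simp
      have sq: "sqrt (real d * (- lam)) = s" unfolding lam_def using n sp by simp
      define a where "a = exp s"
      have a1: "a > 1" unfolding a_def using sp by simp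
      have "cosh s = (a + 1 / a) / 2" unfolding cosh_field_def a_def by (simp add: exp_minus inverse_eq_divide)
      hence "(a + 1 / a) / 2 = \<gamma>" using cs by simp
      hence h2: "a + 1 / a = 2 * \<gamma>" by simp
      have "a * a + 1 = a * (a + 1 / a)" using a1 by (simp add: distrib_left)
      also have "... = 2 * \<gamma> * a" unfolding h2 by simp
      finally have cosha: "a * a + 1 = 2 * \<gamma> * a" .
      have gdef: "2 * E * \<gamma> = 1 + E^2 - \<tau>^2 * (1 + E)^2" unfolding \<gamma>_def using E by simp
      have P: "(E - a) * (E * a - 1) = a * (\<tau>^2 * (1 + E)^2)" using cosha gdef by algebra
      have Ppos: "(E - a) * (E * a - 1) > 0" unfolding P using a1 tp E by simp
      have e2: "exp (2 * s) = a^2" unfolding a_def power2_eq_square exp_add[symmetric] by simp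
      have e3: "exp (D + s) = E * a" unfolding a_def E_def exp_add by simp
      have Cm: "C_minus d D lam = (a^2 - E * a) / (E * a - 1)"
        unfolding C_minus_def Let_def sq e2 e3 by (rule refl)
      note nb = neg_branch[OF E a1 Ppos]
      define r where "r = sqrt (- ((a^2 - E * a) / (E * a - 1))) * (E * a - 1) / (a * (1 + E))"
      have "r^2 = a * (\<tau>^2 * (1 + E)^2) / (a * (1 + E)^2)" using nb(2) unfolding r_def[symmetric] P .
      also have "... = \<tau>^2" using a1 E by simp
      finally have r2: "r^2 = \<tau>^2" .
      have cc1: "\<not> (lam = - (D^2) / real d \<and> - (D^2) / real d < 0)" using lam1 by auto
      have cc2: "- (D^2) / real d < lam \<and> lam < 0" using lam1 lam2 by auto
      have "m_fun d D lam = (let mu = - lam; s = sqrt (- C_minus d D lam); e = exp (sqrt (real d * mu)) in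
        \<bar>ln (((e / s + 1) * (- 1 / s + 1)) / ((1 - e / s) * (1 + 1 / s)))\<bar>)"
        unfolding m_fun_def by (simp only: if_not_P[OF cc1] if_P[OF cc2])
      also have "... = \<bar>ln ((1 - r) / (1 + r))\<bar>"
        unfolding Let_def sq Cm a_def[symmetric] nb(1)[folded r_def] by (rule refl)
      finally have val: "m_fun d D lam = \<bar>ln ((1 - r) / (1 + r))\<bar>" .
      have "\<bar>ln ((1 - r) / (1 + r))\<bar> = y" using log_val[OF y] r2 unfolding \<tau>_def by simp
      thus ?thesis using val lam1 lam2 hi by (intro bexI[of _ lam]) auto
    next
      case 4
      have c1: "\<tau> * (1 + E) > \<bar>1 - E\<bar>" using tau_cmp(2)[OF y 4] unfolding \<tau>_def E_def .
      have "\<bar>1 - E\<bar>^2 < (\<tau> * (1 + E))^2" using c1 by (intro power_strict_mono) auto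
      hence "\<tau>^2 * (1 + E)^2 > (1 - E)^2" by (simp add: power_mult_distrib)
      hence g1: "\<gamma> < 1" unfolding \<gamma>_def using E by (simp add: field_simps power2_eq_square)
      have "\<tau>^2 < 1" using tf(1,2) by (simp add: abs_square_less_1)
      hence "\<tau>^2 * (1 + E)^2 < (1 + E)^2" using E by simp
      hence g2: "\<gamma> > -1" unfolding \<gamma>_def using E by (simp add: field_simps power2_eq_square)
      define t where "t = arccos \<gamma>"
      have tb: "0 < t" "t < pi" unfolding t_def using arccos_lt_bounded[OF g2 g1] by auto
      have ct: "cos t = \<gamma>" unfolding t_def using g1 g2 by simp
      define lam where "lam = t^2 / real d"
      have lam1: "0 < lam" unfolding lam_def using tb n by simp
      have "t^2 < pi^2" using tb by (intro power_strict_mono) auto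
      hence lam2: "lam < pi^2 / real d" unfolding lam_def using n by (simp add: divide_strict_right_mono)
      have sq: "sqrt (real d * lam) = t" unfolding lam_def using n tb by simp
      have "1 + E^2 - 2 * E * cos t = (\<tau> * (1 + E))^2"
        unfolding ct \<gamma>_def using E by (simp add: field_simps power2_eq_square)
      hence rho: "sqrt (1 + E^2 - 2 * E * cos t) = \<tau> * (1 + E)" using tf(1) E by simp
      have ratio: "(1 + E + \<tau> * (1 + E)) / (1 + E - \<tau> * (1 + E)) = (1 + \<tau>) / (1 - \<tau>)"
      proof -
        have "(1 + E + \<tau> * (1 + E)) = (1 + E) * (1 + \<tau>)" "(1 + E - \<tau> * (1 + E)) = (1 + E) * (1 - \<tau>)"
          by (simp_all add: algebra_simps)
        thus ?thesis using E by simp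
      qed
      have pb: "(tan (C_plus d D lam + t) + sec (C_plus d D lam + t)) / (tan (C_plus d D lam) + sec (C_plus d D lam))
          = exp y"
      proof -
        have cp: "C_plus d D lam = arctan ((cos t - E) / sin t)" unfolding C_plus_def sq E_def ..
        show ?thesis unfolding cp using pos_branch[OF E tb, unfolded rho ratio tf(4)] .
      qed
      have "- (D^2) / real d \<le> 0" using n by simp
      hence val: "m_fun d D lam = \<bar>ln (exp y)\<bar>"
        using lam1 unfolding m_fun_def Let_def sq pb by auto
      have "- (D^2) / real d \<le> lam" using \<open>- (D^2) / real d \<le> 0\<close> lam1 by linarith
      thus ?thesis using val y lam2 by (intro bexI[of _ lam]) auto
    qed
  qed
  show ?thesis unfolding D_def[symmetric]
  proof
    show "m_fun d D ` {- (D^2) / real d..<pi^2 / real d} \<subseteq> {0..}" using m_nonneg by auto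
    show "{0..} \<subseteq> m_fun d D ` {- (D^2) / real d..<pi^2 / real d}"
    proof
      fix y :: real assume "y \<in> {0..}"
      then obtain lam where "lam \<in> {- (D^2) / real d..<pi^2 / real d}" "m_fun d D lam = y"
        using \<open>\<And>y. y \<ge> 0 \<Longrightarrow> _\<close> by fastforce
      thus "y \<in> m_fun d D ` {- (D^2) / real d..<pi^2 / real d}" by force
    qed
  qed
qed

end
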